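(* Let $n\ge2$, $1\le n_c\le n-1$, let $\rho_{\text{in}}$ be an $n$-qubit density matrix, and let $f_{\text{SC}}$ be the objective function of the $n$-qubit SC-QNN with parameter $n_c$. For every parameter $\theta$ of a rotation gate acting on qubit $1$ (i.e. the qubit-1 rotation in $V_1$ or the rotation in $V_\ell$ for $n-n_c+1\le\ell\le n$), $$\mathbb{E}_{\boldsymbol\theta}\Big(\frac{\partial f_{\text{SC}}}{\partial\theta}\Big)^2=4\,\mathbb{E}_{\boldsymbol\theta}\Big(f_{\text{SC}}-\frac12\Big)^2,$$ where the expectation is over all parameters drawn independently and uniformly from $[0,2\pi]$.
   Context: Pauli matrices $\sigma_0=I,\sigma_1=X,\sigma_2=Y,\sigma_3=Z$; qubits numbered $1,\dots,n$. A rotation with parameter $\theta$ on qubit $q$ is $e^{-i\theta\sigma_2}$ on qubit $q$. A CNOT with control $c$ and target $t$ is $|0\rangle\langle0|_c\otimes I_t+|1\rangle\langle1|_c\otimes(\sigma_1)_t$. SC-QNN: $V_{\text{SC}}=V_nCX_{n-1}V_{n-1}\cdots CX_1V_1$, where $V_1$ applies a rotation with independent parameter to every qubit; for $2\le\ell\le n-n_c$, $V_\ell$ is a single rotation on qubit $n+1-\ell$; for $n-n_c+1\le\ell\le n$, $V_\ell$ is a single rotation on qubit $1$; for $1\le\ell\le n-1-n_c$, $CX_\ell$ is a CNOT with control $n+1-\ell$ and target $n-\ell$; for $n-n_c\le\ell\le n-1$, $CX_\ell$ is a CNOT with control $n+1-\ell$ and target $1$. $f_{\text{SC}}(\boldsymbol\theta)=\frac12+\frac12\text{Tr}[(\sigma_3\otimes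 I^{\otimes(n-1)})V_{\text{SC}}(\boldsymbol\theta)\rho_{\text{in}}V_{\text{SC}}(\boldsymbol\theta)^\dagger]$. *)

theory Defs
  imports "HOL-Probability.Probability"
begin

text \<open>Square complex matrices of dimension d are represented as functions
  nat => nat => complex; only entries with indices below d matter.
  For n qubits, d = 2^n and basis index i (i < 2^n) encodes the bit string
  b_1 ... b_n with qubit 1 the most significant bit, so that the ordering of
  tensor factors is qubit 1 (x) qubit 2 (x) ... (x) qubit n.\<close>

type_synonym cmat = "nat \<Rightarrow> nat \<Rightarrow> complex"

definition mmul :: "nat \<Rightarrow> cmat \<Rightarrow> cmat \<Rightarrow> cmat" where
  "mmul d A B = (\<lambda>i j. \<Sum>k<d. A i k * B k j)"

definition adj :: "cmat \<Rightarrow> cmat" where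
  "adj A = (\<lambda>i j. cnj (A j i))"

definition mtrace :: "nat \<Rightarrow> cmat \<Rightarrow> complex" where
  "mtrace d A = (\<Sum>i<d. A i i)"

definition idm :: cmat where
  "idm = (\<lambda>i j. if i = j then 1 else 0)"

definition density_matrix :: "nat \<Rightarrow> cmat \<Rightarrow> bool" where
  "density_matrix d \<rho> \<longleftrightarrow>
     (\<forall>i<d. \<forall>j<d. \<rho> i j = cnj (\<rho> j i)) \<and>
     (\<forall>v :: nat \<Rightarrow> complex. 0 \<le> Re (\<Sum>i<d. \<Sum>j<d. cnj (v i) * \<rho> i j * v j)) \<and>
     mtrace d \<rho> = 1"

definition qbit :: "nat \<Rightarrow> nat \<Rightarrow> nat \<Rightarrow> nat" where
  "qbit n q i = (i div 2 ^ (n - q)) mod 2"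

text \<open>Single-qubit 2x2 matrix U (indices 0,1) acting on qubit q of n qubits,
  i.e. I (x) ... (x) U (x) ... (x) I.\<close>
definition on_qubit :: "nat \<Rightarrow> nat \<Rightarrow> cmat \<Rightarrow> cmat" where
  "on_qubit n q U = (\<lambda>i j.
     if (\<forall>p\<in>{1..n}. p \<noteq> q \<longrightarrow> qbit n p i = qbit n p j)
     then U (qbit n q i) (qbit n q j) else 0)"

definition pauliX :: cmat where
  "pauliX = (\<lambda>a b. if a \<noteq> b then 1 else 0)"
definition pauliY :: cmat where
  "pauliY = (\<lambda>a b. if a = 0 \<and> b = 1 then - \<i> else if a = 1 \<and> b = 0 then \<i> else 0)"
definition pauliZ :: cmat where
  "pauliZ = (\<lambda>a b. if a = b then (if a = 0 then 1 else -1) else 0)"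

text \<open>exp(-i theta sigma_2) = cos theta I - i sin theta sigma_2 (since sigma_2^2 = I).\<close>
definition rotY :: "real \<Rightarrow> cmat" where
  "rotY \<theta> = (\<lambda>a b. complex_of_real (cos \<theta>) * idm a b - \<i> * complex_of_real (sin \<theta>) * pauliY a b)"

definition rot :: "nat \<Rightarrow> nat \<Rightarrow> real \<Rightarrow> cmat" where
  "rot n q \<theta> = on_qubit n q (rotY \<theta>)"

text \<open>CNOT with control c and target t:
  |0><0|_c (x) I_t + |1><1|_c (x) (sigma_1)_t.\<close>
definition cnot :: "nat \<Rightarrow> nat \<Rightarrow> nat \<Rightarrow> cmat" where
  "cnot n c t = (\<lambda>i j. if qbit n c i = qbit n c j \<and>
       (\<forall>p\<in>{1..n}. p \<noteq> c \<and> p \<noteq> t \<longrightarrow> qbit n p i = qbit n p j)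
     then (if qbit n c j = 0 then idm (qbit n t i) (qbit n t j)
           else pauliX (qbit n t i) (qbit n t j))
     else 0)"

text \<open>Parameters: theta q (1 <= q <= n) is the parameter of the rotation on
  qubit q in V_1; theta (n + l - 1) (2 <= l <= n) is the parameter of the
  single rotation in V_l.\<close>

definition sc_param_index :: "nat \<Rightarrow> nat \<Rightarrow> nat" where
  "sc_param_index n l = n + l - 1"

text \<open>V_1: a rotation with independent parameter on every qubit
  (these commute; we multiply them in the order of qubits).\<close>
fun V1_aux :: "nat \<Rightarrow> nat \<Rightarrow> (nat \<Rightarrow> real) \<Rightarrow> cmat" where
  "V1_aux n 0 \<theta> = idm"
| "V1_aux n (Suc q) \<theta> = mmul (2^n) (rot n (Suc q) (\<theta> (Suc q))) (V1_aux n q \<theta>)"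

definition V1 :: "nat \<Rightarrow> (nat \<Rightarrow> real) \<Rightarrow> cmat" where
  "V1 n \<theta> = V1_aux n n \<theta>"

definition Vl :: "nat \<Rightarrow> nat \<Rightarrow> nat \<Rightarrow> (nat \<Rightarrow> real) \<Rightarrow> cmat" where
  "Vl n nc l \<theta> =
     (if l \<le> n - nc then rot n (n + 1 - l) (\<theta> (sc_param_index n l))
      else rot n 1 (\<theta> (sc_param_index n l)))"

definition CXl :: "nat \<Rightarrow> nat \<Rightarrow> nat \<Rightarrow> cmat" where
  "CXl n nc l =
     (if l \<le> n - 1 - nc then cnot n (n + 1 - l) (n - l)
      else cnot n (n + 1 - l) 1)"

text \<open>Partial products: sc_partial n nc k \<theta> = V_(k+1) CX_k ... CX_1 V_1.\<close>
fun sc_partial :: "nat \<Rightarrow> nat \<Rightarrow> nat \<Rightarrow> (nat \<Rightarrow> real) \<Rightarrow> cmat" where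
  "sc_partial n nc 0 \<theta> = V1 n \<theta>"
| "sc_partial n nc (Suc k) \<theta> =
     mmul (2^n) (Vl n nc (Suc (Suc k)) \<theta>) (mmul (2^n) (CXl n nc (Suc k)) (sc_partial n nc k \<theta>))"

definition V_SC :: "nat \<Rightarrow> nat \<Rightarrow> (nat \<Rightarrow> real) \<Rightarrow> cmat" where
  "V_SC n nc \<theta> = sc_partial n nc (n - 1) \<theta>"

definition Z1 :: "nat \<Rightarrow> cmat" where
  "Z1 n = on_qubit n 1 pauliZ"

definition f_SC :: "nat \<Rightarrow> nat \<Rightarrow> cmat \<Rightarrow> (nat \<Rightarrow> real) \<Rightarrow> real" where
  "f_SC n nc \<rho> \<theta> = 1/2 + 1/2 * Re (mtrace (2^n)
      (mmul (2^n) (Z1 n) (mmul (2^n) (V_SC n nc \<theta>) (mmul (2^n) \<rho> (adj (V_SC n nc \<theta>))))))"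

definition param_measure :: "nat \<Rightarrow> (nat \<Rightarrow> real) measure" where
  "param_measure n = PiM {1..2*n-1} (\<lambda>_. uniform_measure lborel {0..2*pi})"

definition pderiv_param :: "((nat \<Rightarrow> real) \<Rightarrow> real) \<Rightarrow> nat \<Rightarrow> (nat \<Rightarrow> real) \<Rightarrow> real" where
  "pderiv_param f k \<theta> = deriv (\<lambda>t. f (\<theta>(k := t))) (\<theta> k)"

definition qubit1_params :: "nat \<Rightarrow> nat \<Rightarrow> nat set" where
  "qubit1_params n nc = {1} \<union> sc_param_index n ` {n - nc + 1..n}"

end

theory Submission
  imports Defs
begin


lemma qbit_bit: "qbit n p i = (if bit i (n - p) then 1 else 0)"
  unfolding qbit_def bit_iff_odd by (simp add: odd_iff_mod_2_eq_one)

lemma qbit_lt2: "qbit n p i < 2"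
  unfolding qbit_def by simp

lemma qbit_cases: "qbit n p i = 0 \<or> qbit n p i = 1"
  unfolding qbit_def by auto

lemma bit_ge_len: "(i::nat) < 2^n \<Longrightarrow> n \<le> m \<Longrightarrow> \<not> bit i m"
proof -
  assume a: "i < 2^n" "n \<le> m"
  have "(2::nat)^n \<le> 2^m" using a(2) by simp
  hence "i < 2^m" using a(1) by linarith
  hence "i div 2^m = 0" by simp
  thus ?thesis by (simp add: bit_iff_odd)
qed

lemma idx_ext:
  assumes "i < 2^n" "j < 2^n" "\<forall>p\<in>{1..n}. qbit n p i = qbit n p j"
  shows "i = j"
proof (rule bit_eqI)
  fix m
  show "bit i m = bit j m"
  proof (cases "m < n")
    case True
    have "n - m \<in> {1..n}" using True by auto
    hence "qbit n (n - m) i = qbit n (n - m) j" using assms(3) by blast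
    moreover have "n - (n - m) = m" using True by simp
    ultimately show ?thesis unfolding qbit_bit by (auto split: if_splits)
  next
    case False
    thus ?thesis using bit_ge_len assms(1,2) by (metis not_less)
  qed
qed

definition flip1 :: "nat \<Rightarrow> nat \<Rightarrow> nat" where
  "flip1 n i = flip_bit (n - 1) i"

lemma flip1_lt: "1 \<le> n \<Longrightarrow> i < 2^n \<Longrightarrow> flip1 n i < 2^n"
  unfolding flip1_def
  by (metis take_bit_nat_eq_self_iff take_bit_flip_bit_eq diff_less not_le zero_less_one
        less_le_trans)

lemma flip1_flip1: "flip1 n (flip1 n i) = i"
  unfolding flip1_def by (rule bit_eqI) (auto simp: bit_flip_bit_iff)

lemma qbit_flip1_1: "1 \<le> n \<Longrightarrow> qbit n 1 (flip1 n i) = 1 - qbit n 1 i"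
  unfolding flip1_def qbit_bit by (auto simp: bit_flip_bit_iff)

lemma qbit_flip1_p: "p \<in> {1..n} \<Longrightarrow> p \<noteq> 1 \<Longrightarrow> qbit n p (flip1 n i) = qbit n p i"
  unfolding flip1_def qbit_bit by (auto simp: bit_flip_bit_iff)

lemma flip1_neq: "1 \<le> n \<Longrightarrow> flip1 n i \<noteq> i"
  using qbit_flip1_1[of n i] qbit_cases[of n 1 i] by auto

lemma agree1_iff:
  assumes n: "1 \<le> n" and i: "i < 2^n" and j: "j < 2^n"
  shows "(\<forall>p\<in>{1..n}. p \<noteq> 1 \<longrightarrow> qbit n p i = qbit n p j) \<longleftrightarrow> (j = i \<or> j = flip1 n i)"
proof
  assume h: "\<forall>p\<in>{1..n}. p \<noteq> 1 \<longrightarrow> qbit n p i = qbit n p j"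
  show "j = i \<or> j = flip1 n i"
  proof (cases "qbit n 1 j = qbit n 1 i")
    case True
    hence "i = j" using h by (intro idx_ext[OF i j]) (metis)
    thus ?thesis by simp
  next
    case False
    hence "qbit n 1 j = qbit n 1 (flip1 n i)" using qbit_flip1_1[OF n] qbit_cases[of n 1 i] qbit_cases[of n 1 j] by auto
    hence "flip1 n i = j" using h qbit_flip1_p
      by (intro idx_ext[OF flip1_lt[OF n i] j]) (metis)
    thus ?thesis by simp
  qed
next
  assume "j = i \<or> j = flip1 n i"
  thus "\<forall>p\<in>{1..n}. p \<noteq> 1 \<longrightarrow> qbit n p i = qbit n p j"
    using qbit_flip1_p by auto
qed

lemma agree_all_iff:
  assumes i: "i < 2^n" and j: "j < 2^n"
  shows "(\<forall>p\<in>{1..n}. qbit n p i = qbit n p j) \<longleftrightarrow> j = i"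
  using idx_ext[OF i j] by auto


definition meq :: "nat \<Rightarrow> cmat \<Rightarrow> cmat \<Rightarrow> bool" where
  "meq n A B \<longleftrightarrow> (\<forall>i<2^n. \<forall>j<2^n. A i j = B i j)"

lemma meq_refl[simp]: "meq n A A" by (simp add: meq_def)
lemma meq_sym: "meq n A B \<Longrightarrow> meq n B A" by (simp add: meq_def)
lemma meq_trans: "meq n A B \<Longrightarrow> meq n B C \<Longrightarrow> meq n A C" by (simp add: meq_def)

lemma mmul_assoc: "mmul d (mmul d A B) C = mmul d A (mmul d B C)"
  unfolding mmul_def
  by (auto simp: sum_distrib_left sum_distrib_right mult.assoc intro!: ext sum.swap)

lemma mmul_cong: "meq n A A' \<Longrightarrow> meq n B B' \<Longrightarrow> meq n (mmul (2^n) A B) (mmul (2^n) A' B')"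
  unfolding meq_def mmul_def by auto

lemma sum_flip_delta:
  assumes n: "1 \<le> n" and j: "j < 2^n"
  shows "(\<Sum>k<(2::nat)^n. if j = flip1 n k then f k else 0) = f (flip1 n j)"
proof -
  have "\<And>k. (j = flip1 n k) = (k = flip1 n j)" using flip1_flip1 by metis
  hence "(\<Sum>k<(2::nat)^n. if j = flip1 n k then f k else 0) = (\<Sum>k<(2::nat)^n. if k = flip1 n j then f k else 0)"
    by simp
  also have "\<dots> = f (flip1 n j)" using flip1_lt[OF n j] by (simp add: sum.delta)
  finally show ?thesis .
qed

definition yv :: "nat \<Rightarrow> complex" where
  "yv b = (if b = 0 then - \<i> else \<i>)"

definition Qm :: "nat \<Rightarrow> (nat \<Rightarrow> complex) \<Rightarrow> cmat" where
  "Qm n e = (\<lambda>i j. if j = flip1 n i then yv (qbit n 1 i) * e i else 0)"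

definition goodE :: "nat \<Rightarrow> (nat \<Rightarrow> complex) \<Rightarrow> bool" where
  "goodE n e \<longleftrightarrow> (\<forall>i<2^n. e (flip1 n i) = e i) \<and> (\<forall>i<2^n. e i * cnj (e i) = 1)"

lemma mmul_Qm_left:
  assumes n: "1 \<le> n" and i: "i < 2^n"
  shows "mmul (2^n) (Qm n e) V i j = yv (qbit n 1 i) * e i * V (flip1 n i) j"
proof -
  have "mmul (2^n) (Qm n e) V i j = (\<Sum>k<(2::nat)^n. if k = flip1 n i then yv (qbit n 1 i) * e i * V k j else 0)"
    unfolding mmul_def Qm_def by (intro sum.cong) auto
  also have "\<dots> = yv (qbit n 1 i) * e i * V (flip1 n i) j" using flip1_lt[OF n i] by (simp add: sum.delta)
  finally show ?thesis .
qed

lemma mmul_Qm_right: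
  assumes n: "1 \<le> n" and j: "j < 2^n"
  shows "mmul (2^n) V (Qm n e) i j = V i (flip1 n j) * (yv (qbit n 1 (flip1 n j)) * e (flip1 n j))"
proof -
  have "mmul (2^n) V (Qm n e) i j = (\<Sum>k<(2::nat)^n. if j = flip1 n k then V i k * (yv (qbit n 1 k) * e k) else 0)"
    unfolding mmul_def Qm_def by (intro sum.cong) auto
  also have "\<dots> = V i (flip1 n j) * (yv (qbit n 1 (flip1 n j)) * e (flip1 n j))"
    by (rule sum_flip_delta[OF n j])
  finally show ?thesis .
qed

lemma rot1_form:
  assumes n: "1 \<le> n" and i: "i < 2^n" and j: "j < 2^n"
  shows "rot n 1 t i j = (if j = i \<or> j = flip1 n i then rotY t (qbit n 1 i) (qbit n 1 j) else 0)"
  unfolding rot_def on_qubit_def using agree1_iff[OF n i j] by simp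

lemma rotY_shift:
  assumes "a < 2" "b < 2"
  shows "rotY (t + pi/2) a b = - \<i> * yv a * rotY t (1 - a) b"
  using assms unfolding rotY_def yv_def idm_def pauliY_def
  by (auto simp: less_2_cases_iff cos_add sin_add algebra_simps)

lemma R1:
  assumes n: "1 \<le> n"
  shows "meq n (rot n 1 (t + pi/2)) (mmul (2^n) (Qm n (\<lambda>_. - \<i>)) (rot n 1 t))"
  unfolding meq_def
proof (intro allI impI)
  fix i j assume i: "i < (2::nat)^n" and j: "j < (2::nat)^n"
  have fi: "flip1 n i < 2^n" by (rule flip1_lt[OF n i])
  have e: "(j = flip1 n i \<or> j = flip1 n (flip1 n i)) = (j = i \<or> j = flip1 n i)"
    using flip1_flip1 by metis
  show "rot n 1 (t + pi / 2) i j = mmul (2 ^ n) (Qm n (\<lambda>_. - \<i>)) (rot n 1 t) i j"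
    unfolding mmul_Qm_left[OF n i] rot1_form[OF n i j] rot1_form[OF n fi j] e
    using rotY_shift[OF qbit_lt2 qbit_lt2, of t n 1 i n 1 j] qbit_flip1_1[OF n, of i]
    by (auto simp: algebra_simps)
qed


definition Ign1 :: "nat \<Rightarrow> cmat \<Rightarrow> bool" where
  "Ign1 n G \<longleftrightarrow> (\<forall>i<2^n. \<forall>j<2^n. G (flip1 n i) (flip1 n j) = G i j \<and>
       (qbit n 1 i \<noteq> qbit n 1 j \<longrightarrow> G i j = 0))"

lemma yv_flip: "1 \<le> n \<Longrightarrow> yv (qbit n 1 (flip1 n i)) = - yv (qbit n 1 i)"
  using qbit_flip1_1[of n i] qbit_cases[of n 1 i] by (auto simp: yv_def)

lemma R2:
  assumes n: "1 \<le> n" and G: "Ign1 n G"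
  shows "meq n (mmul (2^n) G (Qm n (\<lambda>_. c))) (mmul (2^n) (Qm n (\<lambda>_. c)) G)"
  unfolding meq_def
proof (intro allI impI)
  fix i j assume i: "i < (2::nat)^n" and j: "j < (2::nat)^n"
  have fi: "flip1 n i < 2^n" by (rule flip1_lt[OF n i])
  have fj: "flip1 n j < 2^n" by (rule flip1_lt[OF n j])
  have "G (flip1 n i) (flip1 n (flip1 n j)) = G i (flip1 n j)" using G i fj unfolding Ign1_def by blast
  hence g1: "G (flip1 n i) j = G i (flip1 n j)" by (simp add: flip1_flip1)
  show "mmul (2 ^ n) G (Qm n (\<lambda>_. c)) i j = mmul (2 ^ n) (Qm n (\<lambda>_. c)) G i j"
    unfolding mmul_Qm_left[OF n i] mmul_Qm_right[OF n j] g1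
  proof (cases "qbit n 1 i = qbit n 1 j")
    case True
    hence "qbit n 1 i \<noteq> qbit n 1 (flip1 n j)" using qbit_flip1_1[OF n, of j] qbit_cases[of n 1 j] by auto
    hence "G i (flip1 n j) = 0" using G i fj unfolding Ign1_def by blast
    thus "G i (flip1 n j) * (yv (qbit n 1 (flip1 n j)) * c) = yv (qbit n 1 i) * c * G i (flip1 n j)" by simp
  next
    case False
    hence "qbit n 1 i = qbit n 1 (flip1 n j)" using qbit_flip1_1[OF n, of j] qbit_cases[of n 1 j] qbit_cases[of n 1 i] by auto
    thus "G i (flip1 n j) * (yv (qbit n 1 (flip1 n j)) * c) = yv (qbit n 1 i) * c * G i (flip1 n j)" by simp
  qed
qed

lemma Ign1_rot:
  assumes n: "1 \<le> n" and q: "q \<in> {1..n}" "q \<noteq> 1"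
  shows "Ign1 n (rot n q s)"
  unfolding Ign1_def rot_def on_qubit_def
proof (intro allI impI conjI)
  fix i j assume i: "i < (2::nat)^n" and j: "j < (2::nat)^n"
  have fq: "qbit n q (flip1 n x) = qbit n q x" for x using qbit_flip1_p[OF q] .
  have c: "(\<forall>p\<in>{1..n}. p \<noteq> q \<longrightarrow> qbit n p (flip1 n i) = qbit n p (flip1 n j)) =
        (\<forall>p\<in>{1..n}. p \<noteq> q \<longrightarrow> qbit n p i = qbit n p j)"
  proof -
    have "qbit n p (flip1 n i) = qbit n p (flip1 n j) \<longleftrightarrow> qbit n p i = qbit n p j" if "p \<in> {1..n}" for p
    proof (cases "p = 1")
      case True thus ?thesis using qbit_flip1_1[OF n] qbit_cases[of n 1 i] qbit_cases[of n 1 j] by auto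
    next
      case False thus ?thesis using qbit_flip1_p[OF that False] by simp
    qed
    thus ?thesis by auto
  qed
  show "(if \<forall>p\<in>{1..n}. p \<noteq> q \<longrightarrow> qbit n p (flip1 n i) = qbit n p (flip1 n j)
        then rotY s (qbit n q (flip1 n i)) (qbit n q (flip1 n j)) else 0) =
       (if \<forall>p\<in>{1..n}. p \<noteq> q \<longrightarrow> qbit n p i = qbit n p j then rotY s (qbit n q i) (qbit n q j) else 0)"
    unfolding c fq by simp
  assume h: "qbit n 1 i \<noteq> qbit n 1 j"
  have "\<not> (\<forall>p\<in>{1..n}. p \<noteq> q \<longrightarrow> qbit n p i = qbit n p j)"
  proof
    assume "\<forall>p\<in>{1..n}. p \<noteq> q \<longrightarrow> qbit n p i = qbit n p j"
    moreover have "(1::nat) \<in> {1..n}" using n by simp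
    ultimately show False using h q(2) by metis
  qed
  thus "(if \<forall>p\<in>{1..n}. p \<noteq> q \<longrightarrow> qbit n p i = qbit n p j then rotY s (qbit n q i) (qbit n q j) else 0) = 0"
    by (rule if_not_P)
qed

lemma Ign1_cnot:
  assumes n: "1 \<le> n" and q: "c \<in> {1..n}" "c \<noteq> 1" "t \<in> {1..n}" "t \<noteq> 1"
  shows "Ign1 n (cnot n c t)"
  unfolding Ign1_def cnot_def
proof (intro allI impI conjI)
  fix i j assume i: "i < (2::nat)^n" and j: "j < (2::nat)^n"
  have fc: "qbit n c (flip1 n x) = qbit n c x" for x using qbit_flip1_p[OF q(1,2)] .
  have ft: "qbit n t (flip1 n x) = qbit n t x" for x using qbit_flip1_p[OF q(3,4)] .
  have c: "(\<forall>p\<in>{1..n}. p \<noteq> c \<and> p \<noteq> t \<longrightarrow> qbit n p (flip1 n i) = qbit n p (flip1 n j)) =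
        (\<forall>p\<in>{1..n}. p \<noteq> c \<and> p \<noteq> t \<longrightarrow> qbit n p i = qbit n p j)"
  proof -
    have "qbit n p (flip1 n i) = qbit n p (flip1 n j) \<longleftrightarrow> qbit n p i = qbit n p j" if "p \<in> {1..n}" for p
    proof (cases "p = 1")
      case True thus ?thesis using qbit_flip1_1[OF n] qbit_cases[of n 1 i] qbit_cases[of n 1 j] by auto
    next
      case False thus ?thesis using qbit_flip1_p[OF that False] by simp
    qed
    thus ?thesis by auto
  qed
  show "(if qbit n c (flip1 n i) = qbit n c (flip1 n j) \<and>
           (\<forall>p\<in>{1..n}. p \<noteq> c \<and> p \<noteq> t \<longrightarrow> qbit n p (flip1 n i) = qbit n p (flip1 n j))
        then if qbit n c (flip1 n j) = 0 then idm (qbit n t (flip1 n i)) (qbit n t (flip1 n j))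
             else pauliX (qbit n t (flip1 n i)) (qbit n t (flip1 n j))
        else 0) =
       (if qbit n c i = qbit n c j \<and> (\<forall>p\<in>{1..n}. p \<noteq> c \<and> p \<noteq> t \<longrightarrow> qbit n p i = qbit n p j)
        then if qbit n c j = 0 then idm (qbit n t i) (qbit n t j) else pauliX (qbit n t i) (qbit n t j)
        else 0)"
    unfolding c fc ft by simp
  assume h: "qbit n 1 i \<noteq> qbit n 1 j"
  have "\<not> (qbit n c i = qbit n c j \<and> (\<forall>p\<in>{1..n}. p \<noteq> c \<and> p \<noteq> t \<longrightarrow> qbit n p i = qbit n p j))"
  proof
    assume "qbit n c i = qbit n c j \<and> (\<forall>p\<in>{1..n}. p \<noteq> c \<and> p \<noteq> t \<longrightarrow> qbit n p i = qbit n p j)"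
    moreover have "(1::nat) \<in> {1..n}" using n by simp
    ultimately show False using h q(2,4) by metis
  qed
  thus "(if qbit n c i = qbit n c j \<and> (\<forall>p\<in>{1..n}. p \<noteq> c \<and> p \<noteq> t \<longrightarrow> qbit n p i = qbit n p j)
        then if qbit n c j = 0 then idm (qbit n t i) (qbit n t j) else pauliX (qbit n t i) (qbit n t j)
        else 0) = 0"
    by (rule if_not_P)
qed

lemma rotY_comm:
  assumes "a < 2" "b < 2"
  shows "rotY s a (1 - b) * yv (1 - b) = yv a * rotY s (1 - a) b"
  using assms unfolding rotY_def yv_def idm_def pauliY_def
  by (auto simp: less_2_cases_iff algebra_simps)

lemma R3:
  assumes n: "1 \<le> n" and e: "goodE n e"
  shows "meq n (mmul (2^n) (rot n 1 s) (Qm n e)) (mmul (2^n) (Qm n e) (rot n 1 s))"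
  unfolding meq_def
proof (intro allI impI)
  fix i j assume i: "i < (2::nat)^n" and j: "j < (2::nat)^n"
  have fi: "flip1 n i < 2^n" by (rule flip1_lt[OF n i])
  have fj: "flip1 n j < 2^n" by (rule flip1_lt[OF n j])
  have c1: "(flip1 n j = i \<or> flip1 n j = flip1 n i) = (j = i \<or> j = flip1 n i)"
    and c2: "(j = flip1 n i \<or> j = flip1 n (flip1 n i)) = (j = i \<or> j = flip1 n i)"
    using flip1_flip1 by metis+
  have ee: "j = i \<or> j = flip1 n i \<Longrightarrow> e (flip1 n j) = e i"
    using e i j fi unfolding goodE_def by (metis flip1_flip1)
  have b1: "qbit n 1 (flip1 n j) = 1 - qbit n 1 j" "qbit n 1 (flip1 n i) = 1 - qbit n 1 i"
    using qbit_flip1_1[OF n] by auto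
  show "mmul (2 ^ n) (rot n 1 s) (Qm n e) i j = mmul (2 ^ n) (Qm n e) (rot n 1 s) i j"
    unfolding mmul_Qm_left[OF n i] mmul_Qm_right[OF n j] rot1_form[OF n i fj] rot1_form[OF n fi j] c1 c2
    using ee rotY_comm[OF qbit_lt2 qbit_lt2, of s n 1 i n 1 j] b1
    by (auto simp: algebra_simps)
qed

lemma cnot1_form:
  assumes n: "1 \<le> n" and c: "c \<in> {1..n}" "c \<noteq> 1" and i: "i < 2^n" and j: "j < 2^n"
  shows "cnot n c 1 i j = (if j = (if qbit n c i = 0 then i else flip1 n i) then 1 else 0)"
proof -
  have cond: "(qbit n c i = qbit n c j \<and> (\<forall>p\<in>{1..n}. p \<noteq> c \<and> p \<noteq> 1 \<longrightarrow> qbit n p i = qbit n p j))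
      = (j = i \<or> j = flip1 n i)"
    using agree1_iff[OF n i j] c by auto
  have fc: "qbit n c (flip1 n i) = qbit n c i" using qbit_flip1_p[OF c] .
  have ne: "flip1 n i \<noteq> i" using flip1_neq[OF n] .
  have b: "qbit n 1 (flip1 n i) = 1 - qbit n 1 i" using qbit_flip1_1[OF n] .
  show ?thesis
    unfolding cnot_def cond using fc ne b qbit_cases[of n 1 i] qbit_cases[of n c i]
    by (auto simp: idm_def pauliX_def)
qed

lemma R4:
  assumes n: "1 \<le> n" and c: "c \<in> {1..n}" "c \<noteq> 1" and e: "goodE n e"
  shows "meq n (mmul (2^n) (cnot n c 1) (Qm n e))
             (mmul (2^n) (Qm n (\<lambda>i. e i * (if qbit n c i = 0 then 1 else -1))) (cnot n c 1))"
  unfolding meq_def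
proof (intro allI impI)
  fix i j assume i: "i < (2::nat)^n" and j: "j < (2::nat)^n"
  have fi: "flip1 n i < 2^n" by (rule flip1_lt[OF n i])
  have fj: "flip1 n j < 2^n" by (rule flip1_lt[OF n j])
  have fc: "qbit n c (flip1 n x) = qbit n c x" for x using qbit_flip1_p[OF c] .
  have b: "qbit n 1 (flip1 n x) = 1 - qbit n 1 x" for x using qbit_flip1_1[OF n] .
  have ef: "e (flip1 n i) = e i" using e i unfolding goodE_def by blast
  have l: "mmul (2^n) (cnot n c 1) (Qm n e) i j =
      (\<Sum>k<(2::nat)^n. if k = (if qbit n c i = 0 then i else flip1 n i) then Qm n e k j else 0)"
    unfolding mmul_def
  proof (intro sum.cong refl)
    fix k assume "k \<in> {..<(2::nat)^n}"
    hence k: "k < 2^n" by simp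
    show "cnot n c 1 i k * Qm n e k j = (if k = (if qbit n c i = 0 then i else flip1 n i) then Qm n e k j else 0)"
      by (simp only: cnot1_form[OF n c i k]) simp
  qed
  also have "\<dots> = Qm n e (if qbit n c i = 0 then i else flip1 n i) j"
    using i fi by (simp add: sum.delta)
  finally have L: "mmul (2^n) (cnot n c 1) (Qm n e) i j = Qm n e (if qbit n c i = 0 then i else flip1 n i) j" .
  have R: "mmul (2^n) (Qm n (\<lambda>i. e i * (if qbit n c i = 0 then 1 else -1))) (cnot n c 1) i j
     = yv (qbit n 1 i) * (e i * (if qbit n c i = 0 then 1 else -1)) *
        (if j = (if qbit n c i = 0 then flip1 n i else flip1 n (flip1 n i)) then 1 else 0)"
    unfolding mmul_Qm_left[OF n i] cnot1_form[OF n c fi j] fc by simp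
  show "mmul (2^n) (cnot n c 1) (Qm n e) i j =
      mmul (2^n) (Qm n (\<lambda>i. e i * (if qbit n c i = 0 then 1 else -1))) (cnot n c 1) i j"
    unfolding L R unfolding Qm_def using yv_flip[OF n, of i] ef
    by (auto simp: flip1_flip1)
qed

lemma goodE_const: "goodE n (\<lambda>_. - \<i>)"
  unfolding goodE_def by simp

lemma goodE_cnot:
  assumes c: "c \<in> {1..n}" "c \<noteq> 1" and e: "goodE n e"
  shows "goodE n (\<lambda>i. e i * (if qbit n c i = 0 then 1 else -1))"
  using e qbit_flip1_p[OF c] unfolding goodE_def by auto


definition zz :: "nat \<Rightarrow> nat \<Rightarrow> complex" where
  "zz n i = (if qbit n 1 i = 0 then 1 else -1)"

definition GG :: "nat \<Rightarrow> cmat \<Rightarrow> cmat \<Rightarrow> nat \<Rightarrow> complex" where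
  "GG n \<rho> V i = (\<Sum>a<(2::nat)^n. \<Sum>b<(2::nat)^n. V i a * \<rho> a b * cnj (V i b))"

definition TT :: "nat \<Rightarrow> cmat \<Rightarrow> cmat \<Rightarrow> real" where
  "TT n \<rho> V = Re (mtrace (2^n) (mmul (2^n) (Z1 n) (mmul (2^n) V (mmul (2^n) \<rho> (adj V)))))"

lemma Z1_form:
  assumes n: "1 \<le> n" and i: "i < 2^n" and k: "k < 2^n"
  shows "Z1 n i k = (if k = i then zz n i else 0)"
proof -
  have "qbit n 1 (flip1 n i) \<noteq> qbit n 1 i"
    using qbit_flip1_1[OF n, of i] qbit_cases[of n 1 i] by auto
  hence "pauliZ (qbit n 1 i) (qbit n 1 (flip1 n i)) = 0" by (simp add: pauliZ_def)
  thus ?thesis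
    unfolding Z1_def on_qubit_def using agree1_iff[OF n i k]
    by (auto simp: pauliZ_def zz_def)
qed

lemma TT_eq:
  assumes n: "1 \<le> n"
  shows "TT n \<rho> V = Re (\<Sum>i<(2::nat)^n. zz n i * GG n \<rho> V i)"
proof -
  have "mtrace (2^n) (mmul (2^n) (Z1 n) (mmul (2^n) V (mmul (2^n) \<rho> (adj V))))
     = (\<Sum>i<(2::nat)^n. \<Sum>k<(2::nat)^n. Z1 n i k * mmul (2^n) V (mmul (2^n) \<rho> (adj V)) k i)"
    unfolding mtrace_def mmul_def[of _ "Z1 n"] by simp
  also have "\<dots> = (\<Sum>i<(2::nat)^n. \<Sum>k<(2::nat)^n. if k = i then zz n i * mmul (2^n) V (mmul (2^n) \<rho> (adj V)) k i else 0)"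
    by (intro sum.cong refl) (simp add: Z1_form[OF n])
  also have "\<dots> = (\<Sum>i<(2::nat)^n. zz n i * mmul (2^n) V (mmul (2^n) \<rho> (adj V)) i i)"
    by (simp add: sum.delta')
  also have "\<dots> = (\<Sum>i<(2::nat)^n. zz n i * GG n \<rho> V i)"
    unfolding GG_def mmul_def adj_def by (simp add: sum_distrib_left mult.assoc)
  finally show ?thesis unfolding TT_def by simp
qed

lemma zz_flip: "1 \<le> n \<Longrightarrow> zz n (flip1 n i) = - zz n i"
  using qbit_flip1_1[of n i] qbit_cases[of n 1 i] by (auto simp: zz_def)

lemma R5:
  assumes n: "1 \<le> n"
    and V': "\<forall>i<2^n. \<forall>j<2^n. V' i j = c i * V (flip1 n i) j"
    and c: "\<forall>i<2^n. c i * cnj (c i) = 1"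
  shows "TT n \<rho> V' = - TT n \<rho> V"
proof -
  have G: "GG n \<rho> V' i = GG n \<rho> V (flip1 n i)" if i: "i < 2^n" for i
  proof -
    have "GG n \<rho> V' i = (\<Sum>a<(2::nat)^n. \<Sum>b<(2::nat)^n. (c i * cnj (c i)) * (V (flip1 n i) a * \<rho> a b * cnj (V (flip1 n i) b)))"
      unfolding GG_def by (intro sum.cong refl) (simp add: V' i mult_ac)
    also have "\<dots> = GG n \<rho> V (flip1 n i)" using c i unfolding GG_def by simp
    finally show ?thesis .
  qed
  have "(\<Sum>i<(2::nat)^n. zz n i * GG n \<rho> V' i) = (\<Sum>i<(2::nat)^n. zz n i * GG n \<rho> V (flip1 n i))"
    by (intro sum.cong refl) (simp add: G)
  also have "\<dots> = (\<Sum>j<(2::nat)^n. zz n (flip1 n j) * GG n \<rho> V j)"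
    by (rule sum.reindex_bij_witness[where i="flip1 n" and j="flip1 n"])
       (auto simp: flip1_flip1 flip1_lt[OF n])
  also have "\<dots> = - (\<Sum>j<(2::nat)^n. zz n j * GG n \<rho> V j)"
    by (simp add: zz_flip[OF n] sum_negf)
  finally show ?thesis unfolding TT_eq[OF n] by simp
qed

definition LINm :: "(real \<Rightarrow> cmat) \<Rightarrow> bool" where
  "LINm \<phi> \<longleftrightarrow> (\<forall>t i j. \<phi> t i j = complex_of_real (cos t) * \<phi> 0 i j + complex_of_real (sin t) * \<phi> (pi/2) i j)"

lemma aux_expand:
  fixes c s :: real and A B A' B' r :: complex
  shows "(of_real c * A + of_real s * B) * r * cnj (of_real c * A' + of_real s * B')
    = of_real c^2 * (A*r*cnj A') + of_real s^2 * (B*r*cnj B') + (of_real c * of_real s) * (A*r*cnj B' + B*r*cnj A')"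
  by (simp add: algebra_simps power2_eq_square)

lemma GG_expand:
  assumes L: "LINm \<phi>"
  shows "GG n \<rho> (\<phi> t) i = complex_of_real ((cos t)^2) * GG n \<rho> (\<phi> 0) i + complex_of_real ((sin t)^2) * GG n \<rho> (\<phi> (pi/2)) i
     + complex_of_real (cos t * sin t) * (\<Sum>a<(2::nat)^n. \<Sum>b<(2::nat)^n. \<phi> 0 i a * \<rho> a b * cnj (\<phi> (pi/2) i b) + \<phi> (pi/2) i a * \<rho> a b * cnj (\<phi> 0 i b))"
proof -
  let ?c = "complex_of_real (cos t)" and ?s = "complex_of_real (sin t)"
  have "GG n \<rho> (\<phi> t) i = (\<Sum>a<(2::nat)^n. \<Sum>b<(2::nat)^n.
      ?c^2 * (\<phi> 0 i a * \<rho> a b * cnj (\<phi> 0 i b)) + ?s^2 * (\<phi> (pi/2) i a * \<rho> a b * cnj (\<phi> (pi/2) i b))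
      + (?c * ?s) * (\<phi> 0 i a * \<rho> a b * cnj (\<phi> (pi/2) i b) + \<phi> (pi/2) i a * \<rho> a b * cnj (\<phi> 0 i b)))"
  proof -
    have Ea: "\<phi> t i a = ?c * \<phi> 0 i a + ?s * \<phi> (pi/2) i a" for a
      using L unfolding LINm_def by blast
    show ?thesis unfolding GG_def Ea by (simp only: aux_expand)
  qed
  also have "\<dots> = ?c^2 * GG n \<rho> (\<phi> 0) i + ?s^2 * GG n \<rho> (\<phi> (pi/2)) i
     + (?c * ?s) * (\<Sum>a<(2::nat)^n. \<Sum>b<(2::nat)^n. \<phi> 0 i a * \<rho> a b * cnj (\<phi> (pi/2) i b) + \<phi> (pi/2) i a * \<rho> a b * cnj (\<phi> 0 i b))"
    unfolding GG_def by (simp add: distrib_left sum.distrib sum_distrib_left)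
  finally show ?thesis by simp
qed

lemma TT_quad:
  assumes n: "1 \<le> n" and L: "LINm \<phi>"
  shows "\<exists>H. \<forall>t. TT n \<rho> (\<phi> t) = (cos t)^2 * TT n \<rho> (\<phi> 0) + (sin t)^2 * TT n \<rho> (\<phi> (pi/2)) + cos t * sin t * H"
proof -
  define X where "X i = (\<Sum>a<(2::nat)^n. \<Sum>b<(2::nat)^n. \<phi> 0 i a * \<rho> a b * cnj (\<phi> (pi/2) i b) + \<phi> (pi/2) i a * \<rho> a b * cnj (\<phi> 0 i b))" for i
  show ?thesis
  proof (intro exI allI)
    fix t
    have e1: "zz n i * GG n \<rho> (\<phi> t) i =
       complex_of_real ((cos t)^2) * (zz n i * GG n \<rho> (\<phi> 0) i)
     + complex_of_real ((sin t)^2) * (zz n i * GG n \<rho> (\<phi> (pi/2)) i)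
     + complex_of_real (cos t * sin t) * (zz n i * X i)" for i
      unfolding GG_expand[OF L, where t=t] X_def[symmetric] by (simp only: distrib_left mult_ac)
    have "(\<Sum>i<(2::nat)^n. zz n i * GG n \<rho> (\<phi> t) i) =
       complex_of_real ((cos t)^2) * (\<Sum>i<(2::nat)^n. zz n i * GG n \<rho> (\<phi> 0) i)
     + complex_of_real ((sin t)^2) * (\<Sum>i<(2::nat)^n. zz n i * GG n \<rho> (\<phi> (pi/2)) i)
     + complex_of_real (cos t * sin t) * (\<Sum>i<(2::nat)^n. zz n i * X i)"
      unfolding e1 by (simp only: sum.distrib sum_distrib_left)
    thus "TT n \<rho> (\<phi> t) = (cos t)^2 * TT n \<rho> (\<phi> 0) + (sin t)^2 * TT n \<rho> (\<phi> (pi/2)) + cos t * sin t * Re (\<Sum>i<(2::nat)^n. zz n i * X i)"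
      unfolding TT_eq[OF n] by simp
  qed
qed


lemma meq_step:
  assumes G: "meq n (mmul (2^n) G (Qm n e)) (mmul (2^n) (Qm n e') G)"
    and A: "meq n A (mmul (2^n) (Qm n e) B)"
  shows "meq n (mmul (2^n) G A) (mmul (2^n) (Qm n e') (mmul (2^n) G B))"
proof -
  have 1: "meq n (mmul (2^n) G A) (mmul (2^n) G (mmul (2^n) (Qm n e) B))"
    by (rule mmul_cong[OF meq_refl A])
  have 3: "meq n (mmul (2^n) (mmul (2^n) G (Qm n e)) B) (mmul (2^n) (mmul (2^n) (Qm n e') G) B)"
    by (rule mmul_cong[OF G meq_refl])
  show ?thesis using meq_trans[OF 1 3[unfolded mmul_assoc]] .
qed

lemma V1_aux_indep: "(\<forall>j\<in>{1..q}. \<theta> j = \<theta>' j) \<Longrightarrow> V1_aux n q \<theta> = V1_aux n q \<theta>'"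
  by (induction q) auto

lemma sc_partial_indep:
  "(\<forall>j\<in>{1..n+m}. \<theta> j = \<theta>' j) \<Longrightarrow> sc_partial n nc m \<theta> = sc_partial n nc m \<theta>'"
proof (induction m)
  case 0
  thus ?case using V1_aux_indep[of n \<theta> \<theta>' n] by (simp add: V1_def)
next
  case (Suc m)
  have "Vl n nc (Suc (Suc m)) \<theta> = Vl n nc (Suc (Suc m)) \<theta>'"
    using Suc.prems unfolding Vl_def sc_param_index_def by auto
  thus ?case using Suc by simp
qed

definition INV :: "nat \<Rightarrow> nat \<Rightarrow> nat \<Rightarrow> (nat \<Rightarrow> real) \<Rightarrow> (nat \<Rightarrow> real) \<Rightarrow> bool" where
  "INV n nc m \<theta>a \<theta>b \<longleftrightarrow> (\<exists>e. goodE n e \<and> (m < n - nc \<longrightarrow> e = (\<lambda>_. - \<i>)) \<and>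
      meq n (sc_partial n nc m \<theta>a) (mmul (2^n) (Qm n e) (sc_partial n nc m \<theta>b)))"

lemma INV_step:
  assumes n: "2 \<le> n" and nc: "1 \<le> nc" "nc \<le> n - 1"
    and m: "Suc m \<le> n - 1" and k: "k \<le> n + m" and ab: "\<forall>j. j \<noteq> k \<longrightarrow> \<theta>a j = \<theta>b j"
    and I: "INV n nc m \<theta>a \<theta>b"
  shows "INV n nc (Suc m) \<theta>a \<theta>b"
proof -
  have n1: "1 \<le> n" using n by simp
  obtain e where e: "goodE n e" and ec: "m < n - nc \<longrightarrow> e = (\<lambda>_. - \<i>)"
    and P: "meq n (sc_partial n nc m \<theta>a) (mmul (2^n) (Qm n e) (sc_partial n nc m \<theta>b))"
    using I unfolding INV_def by blast
  have Veq: "Vl n nc (Suc (Suc m)) \<theta>a = Vl n nc (Suc (Suc m)) \<theta>b"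
    using ab k unfolding Vl_def sc_param_index_def by auto
  show ?thesis
  proof (cases "Suc m < n - nc")
    case True
    hence e0: "e = (\<lambda>_. - \<i>)" using ec by simp
    have CX: "CXl n nc (Suc m) = cnot n (n - m) (n - Suc m)"
      using True unfolding CXl_def by auto
    have VL: "Vl n nc (Suc (Suc m)) \<theta>b = rot n (n - Suc m) (\<theta>b (sc_param_index n (Suc (Suc m))))"
      using True unfolding Vl_def by auto
    have ig1: "Ign1 n (CXl n nc (Suc m))" unfolding CX using True nc m
      by (intro Ign1_cnot[OF n1]) auto
    have ig2: "Ign1 n (Vl n nc (Suc (Suc m)) \<theta>b)" unfolding VL using True nc m
      by (intro Ign1_rot[OF n1]) auto
    have s1: "meq n (mmul (2^n) (CXl n nc (Suc m)) (sc_partial n nc m \<theta>a))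
       (mmul (2^n) (Qm n e) (mmul (2^n) (CXl n nc (Suc m)) (sc_partial n nc m \<theta>b)))"
      using meq_step[OF R2[OF n1 ig1] P[unfolded e0]] unfolding e0 .
    have s2: "meq n (sc_partial n nc (Suc m) \<theta>a) (mmul (2^n) (Qm n e) (sc_partial n nc (Suc m) \<theta>b))"
      unfolding sc_partial.simps(2) Veq e0
      by (rule meq_step[OF R2[OF n1 ig2] s1[unfolded e0]])
    show ?thesis unfolding INV_def using e s2 e0 by blast
  next
    case False
    define c where "c = n - m"
    have c: "c \<in> {1..n}" "c \<noteq> 1" using m unfolding c_def by auto
    have CX: "CXl n nc (Suc m) = cnot n c 1"
      using False unfolding CXl_def c_def by auto
    have VL: "Vl n nc (Suc (Suc m)) \<theta>b = rot n 1 (\<theta>b (sc_param_index n (Suc (Suc m))))"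
      using False unfolding Vl_def by auto
    define e' where "e' = (\<lambda>i. e i * (if qbit n c i = 0 then 1 else -1))"
    have ge': "goodE n e'" unfolding e'_def by (rule goodE_cnot[OF c e])
    have s1: "meq n (mmul (2^n) (CXl n nc (Suc m)) (sc_partial n nc m \<theta>a))
       (mmul (2^n) (Qm n e') (mmul (2^n) (CXl n nc (Suc m)) (sc_partial n nc m \<theta>b)))"
      unfolding CX e'_def by (rule meq_step[OF R4[OF n1 c e] P])
    have s2: "meq n (sc_partial n nc (Suc m) \<theta>a) (mmul (2^n) (Qm n e') (sc_partial n nc (Suc m) \<theta>b))"
      unfolding sc_partial.simps(2) Veq VL
      by (rule meq_step[OF R3[OF n1 ge', of "\<theta>b (sc_param_index n (Suc (Suc m)))"] s1])
    show ?thesis unfolding INV_def using ge' s2 False by auto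
  qed
qed

lemma INV_upto:
  assumes n: "2 \<le> n" and nc: "1 \<le> nc" "nc \<le> n - 1"
    and m0: "m0 \<le> m" "m \<le> n - 1" and k: "k \<le> n + m0" and ab: "\<forall>j. j \<noteq> k \<longrightarrow> \<theta>a j = \<theta>b j"
    and I: "INV n nc m0 \<theta>a \<theta>b"
  shows "INV n nc m \<theta>a \<theta>b"
  using m0
proof (induction m rule: dec_induct)
  case base show ?case by (rule I)
next
  case (step p)
  show ?case by (rule INV_step[OF n nc _ _ ab step.IH]) (use step k in auto)
qed

lemma V1_aux_k1:
  assumes n: "1 \<le> n" and q: "1 \<le> q" and qn: "q \<le> n"
  shows "meq n (V1_aux n q (\<theta>(1 := t + pi/2))) (mmul (2^n) (Qm n (\<lambda>_. - \<i>)) (V1_aux n q (\<theta>(1 := t))))"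
  using q qn
proof (induction q rule: dec_induct)
  case base
  have "meq n (mmul (2^n) (rot n 1 (t + pi/2)) idm) (mmul (2^n) (mmul (2^n) (Qm n (\<lambda>_. - \<i>)) (rot n 1 t)) idm)"
    by (rule mmul_cong[OF R1[OF n] meq_refl])
  thus ?case by (simp add: mmul_assoc)
next
  case (step p)
  have ig: "Ign1 n (rot n (Suc p) (\<theta> (Suc p)))" using step.hyps step.prems
    by (intro Ign1_rot[OF n]) auto
  show ?case using meq_step[OF R2[OF n ig] step.IH] step.hyps step.prems by simp
qed

lemma I1_meq:
  assumes n: "2 \<le> n" and nc: "1 \<le> nc" "nc \<le> n - 1" and k: "k \<in> qubit1_params n nc"
  shows "\<exists>e. goodE n e \<and> meq n (V_SC n nc (\<theta>(k := t + pi/2))) (mmul (2^n) (Qm n e) (V_SC n nc (\<theta>(k := t))))"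
proof -
  have n1: "1 \<le> n" using n by simp
  have ab: "\<forall>j. j \<noteq> k \<longrightarrow> (\<theta>(k := t + pi/2)) j = (\<theta>(k := t)) j" by simp
  have "INV n nc (n - 1) (\<theta>(k := t + pi/2)) (\<theta>(k := t))"
  proof (cases "k = 1")
    case True
    have I0: "INV n nc 0 (\<theta>(k := t + pi/2)) (\<theta>(k := t))"
      unfolding INV_def True using V1_aux_k1[OF n1 n1 order_refl, of \<theta> t] goodE_const
      by (auto simp: V1_def)
    show ?thesis by (rule INV_upto[OF n nc _ _ _ ab I0]) (use True n in auto)
  next
    case False
    then obtain l where l: "l \<in> {n - nc + 1..n}" and kl: "k = n + l - 1"
      using k unfolding qubit1_params_def sc_param_index_def by auto
    obtain g' where g': "l = Suc (Suc g')" using l nc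
      by (intro that[of "l - 2"]) auto
    have g: "n - nc \<le> Suc g'" "Suc g' \<le> n - 1" "k = n + Suc g'"
      using l kl g' nc by auto
    have same: "sc_partial n nc g' (\<theta>(k := t + pi/2)) = sc_partial n nc g' (\<theta>(k := t))"
      by (rule sc_partial_indep) (use g in auto)
    have VLa: "Vl n nc (Suc (Suc g')) (\<theta>(k := s)) = rot n 1 s" for s
      using g unfolding Vl_def sc_param_index_def by auto
    have "meq n (sc_partial n nc (Suc g') (\<theta>(k := t + pi/2)))
        (mmul (2^n) (mmul (2^n) (Qm n (\<lambda>_. - \<i>)) (rot n 1 t)) (mmul (2^n) (CXl n nc (Suc g')) (sc_partial n nc g' (\<theta>(k := t)))))"
      unfolding sc_partial.simps(2) VLa same by (rule mmul_cong[OF R1[OF n1] meq_refl])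
    hence M: "meq n (sc_partial n nc (Suc g') (\<theta>(k := t + pi/2)))
        (mmul (2^n) (Qm n (\<lambda>_. - \<i>)) (sc_partial n nc (Suc g') (\<theta>(k := t))))"
      unfolding mmul_assoc sc_partial.simps(2) VLa .
    have "\<not> Suc g' < n - nc" using g by simp
    hence I0: "INV n nc (Suc g') (\<theta>(k := t + pi/2)) (\<theta>(k := t))"
      unfolding INV_def using goodE_const M by blast
    show ?thesis by (rule INV_upto[OF n nc _ _ _ ab I0]) (use g in auto)
  qed
  thus ?thesis unfolding INV_def V_SC_def by blast
qed

lemma I1:
  assumes n: "2 \<le> n" and nc: "1 \<le> nc" "nc \<le> n - 1" and k: "k \<in> qubit1_params n nc"
  shows "TT n \<rho> (V_SC n nc (\<theta>(k := t + pi/2))) = - TT n \<rho> (V_SC n nc (\<theta>(k := t)))"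
proof -
  have n1: "1 \<le> n" using n by simp
  obtain e where e: "goodE n e" and M: "meq n (V_SC n nc (\<theta>(k := t + pi/2))) (mmul (2^n) (Qm n e) (V_SC n nc (\<theta>(k := t))))"
    using I1_meq[OF n nc k] by blast
  show ?thesis
  proof (rule R5[OF n1])
    show "\<forall>i<2^n. \<forall>j<2^n. V_SC n nc (\<theta>(k := t + pi/2)) i j = (yv (qbit n 1 i) * e i) * V_SC n nc (\<theta>(k := t)) (flip1 n i) j"
    proof (intro allI impI)
      fix i j :: nat assume i: "i < 2^n" and j: "j < 2^n"
      have "V_SC n nc (\<theta>(k := t + pi/2)) i j = mmul (2^n) (Qm n e) (V_SC n nc (\<theta>(k := t))) i j"
        using M i j unfolding meq_def by blast
      thus "V_SC n nc (\<theta>(k := t + pi/2)) i j = (yv (qbit n 1 i) * e i) * V_SC n nc (\<theta>(k := t)) (flip1 n i) j"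
        unfolding mmul_Qm_left[OF n1 i] .
    qed
    show "\<forall>i<2^n. yv (qbit n 1 i) * e i * cnj (yv (qbit n 1 i) * e i) = 1"
    proof (intro allI impI)
      fix i :: nat assume "i < 2^n"
      hence "e i * cnj (e i) = 1" using e unfolding goodE_def by blast
      moreover have "yv (qbit n 1 i) * cnj (yv (qbit n 1 i)) = 1" by (simp add: yv_def)
      moreover have "yv (qbit n 1 i) * e i * cnj (yv (qbit n 1 i) * e i) = (yv (qbit n 1 i) * cnj (yv (qbit n 1 i))) * (e i * cnj (e i))"
        by (simp only: complex_cnj_mult mult_ac)
      ultimately show "yv (qbit n 1 i) * e i * cnj (yv (qbit n 1 i) * e i) = 1"
        by simp
    qed
  qed
qed


abbreviation UM :: "real measure" where
  "UM \<equiv> uniform_measure lborel {0..2*pi}"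

lemma UM_density: "UM = density lborel (\<lambda>x. ennreal (indicator {0..2*pi} x / (2*pi)))"
proof -
  have "(\<lambda>x. (indicator {0..2*pi} x :: ennreal) / emeasure lborel {0..2*pi}) = (\<lambda>x. ennreal (indicator {0..2*pi} x / (2*pi)))"
  proof
    fix x
    show "(indicator {0..2*pi} x :: ennreal) / emeasure lborel {0..2*pi} = ennreal (indicator {0..2*pi} x / (2*pi))"
      by (cases "x \<in> {0..2*pi}") (auto simp: divide_ennreal[symmetric] ennreal_1[symmetric] simp del: ennreal_1 atLeastAtMost_iff)
  qed
  thus ?thesis unfolding uniform_measure_def by simp
qed

lemma trig_sq:
  fixes a b u :: real
  shows "(a^2+b^2)/2 + (a^2-b^2)/2 * cos (2*u) + a*b * sin (2*u) = (a * cos u + b * sin u)^2"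
proof -
  have c2: "cos (2*u) = 1 - 2 * (sin u)^2" by (rule cos_double_sin)
  have s2: "sin (2*u) = 2 * sin u * cos u" by (rule sin_double)
  have cs: "(cos u)^2 = 1 - (sin u)^2" by (simp add: cos_squared_eq)
  have e: "(a * cos u + b * sin u)^2 = a^2 * (cos u)^2 + 2*a*b*(sin u * cos u) + b^2 * (sin u)^2"
    by algebra
  show ?thesis unfolding e cs c2 s2 by (simp add: algebra_simps divide_simps)
qed

lemma integral_UM:
  fixes f :: "real \<Rightarrow> real"
  assumes f: "f \<in> borel_measurable borel"
  shows "integral\<^sup>L UM f = (\<integral>x. indicator {0..2*pi} x *\<^sub>R f x \<partial>lborel) / (2*pi)"
proof -
  have "integral\<^sup>L UM f = (\<integral>x. (indicator {0..2*pi} x / (2*pi)) *\<^sub>R f x \<partial>lborel)"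
    unfolding UM_density by (rule integral_density) (use f in auto)
  also have "\<dots> = (\<integral>x. indicator {0..2*pi} x *\<^sub>R f x \<partial>lborel) / (2*pi)"
    by (simp add: mult.commute)
  finally show ?thesis .
qed

lemma integral_UM_sq:
  fixes a b :: real
  shows "(\<integral>y. (a * cos (2*y) + b * sin (2*y))^2 \<partial>UM) = (a^2 + b^2) / 2"
proof -
  define G where "G y = (a^2 + b^2) * y / 2 + (a^2 - b^2) * sin (4 * y) / 8 - a * b * cos (4 * y) / 4" for y :: real
  have D: "(G has_real_derivative (a * cos (2*y) + b * sin (2*y))^2) (at y)" for y
  proof -
    have "(G has_real_derivative ((a^2+b^2)/2 + (a^2-b^2)/2 * cos (2*(2*y)) + a*b * sin (2*(2*y)))) (at y)"
      unfolding G_def by (auto intro!: derivative_eq_intros simp: field_simps)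
    thus ?thesis by (simp only: trig_sq)
  qed
  have "(\<integral>y. indicator {0..2*pi} y *\<^sub>R (a * cos (2*y) + b * sin (2*y))^2 \<partial>lborel) = G (2*pi) - G 0"
    by (rule integral_FTC_atLeastAtMost)
       (auto intro!: continuous_intros simp: has_real_derivative_iff_has_vector_derivative[symmetric]
             intro: has_field_derivative_at_within D)
  also have "\<dots> = (a^2+b^2) * pi"
  proof -
    have "sin (4 * (2*pi)) = 0" using sin_npi[of 8] by (simp add: mult_ac)
    moreover have "cos (4 * (2*pi)) = 1" using cos_npi_int[of 8] by (simp add: mult_ac)
    ultimately show ?thesis unfolding G_def by simp
  qed
  finally show ?thesis
    by (subst integral_UM) auto
qed


lemma LINm_left:
  assumes L: "LINm \<phi>"
  shows "LINm (\<lambda>t. mmul d C (\<phi> t))"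
  unfolding LINm_def
proof (intro allI)
  fix t i j
  have e: "\<phi> t a j = complex_of_real (cos t) * \<phi> 0 a j + complex_of_real (sin t) * \<phi> (pi/2) a j" for a
    using L unfolding LINm_def by blast
  show "mmul d C (\<phi> t) i j = complex_of_real (cos t) * mmul d C (\<phi> 0) i j + complex_of_real (sin t) * mmul d C (\<phi> (pi/2)) i j"
    unfolding mmul_def e by (simp add: distrib_left sum.distrib sum_distrib_left mult_ac)
qed

lemma LINm_right:
  assumes L: "LINm \<phi>"
  shows "LINm (\<lambda>t. mmul d (\<phi> t) C)"
  unfolding LINm_def
proof (intro allI)
  fix t i j
  have e: "\<phi> t i a = complex_of_real (cos t) * \<phi> 0 i a + complex_of_real (sin t) * \<phi> (pi/2) i a" for a
    using L unfolding LINm_def by blast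
  show "mmul d (\<phi> t) C i j = complex_of_real (cos t) * mmul d (\<phi> 0) C i j + complex_of_real (sin t) * mmul d (\<phi> (pi/2)) C i j"
    unfolding mmul_def e by (simp add: distrib_right distrib_left sum.distrib sum_distrib_left mult_ac)
qed

lemma LINm_rot: "LINm (\<lambda>t. rot n q t)"
  unfolding LINm_def rot_def on_qubit_def rotY_def
  by (auto simp: idm_def pauliY_def)

lemma LIN_step:
  assumes k: "k \<le> n + m" and L: "LINm (\<lambda>t. sc_partial n nc m (\<theta>(k := t)))"
  shows "LINm (\<lambda>t. sc_partial n nc (Suc m) (\<theta>(k := t)))"
proof -
  have V: "Vl n nc (Suc (Suc m)) (\<theta>(k := t)) = Vl n nc (Suc (Suc m)) \<theta>" for t
    using k unfolding Vl_def sc_param_index_def by auto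
  show ?thesis unfolding sc_partial.simps V
    by (intro LINm_left L)
qed

lemma LIN_upto:
  assumes m0: "m0 \<le> m" and k: "k \<le> n + m0" and L: "LINm (\<lambda>t. sc_partial n nc m0 (\<theta>(k := t)))"
  shows "LINm (\<lambda>t. sc_partial n nc m (\<theta>(k := t)))"
  using m0
proof (induction m rule: dec_induct)
  case base show ?case by (rule L)
next
  case (step p)
  show ?case by (rule LIN_step[OF _ step.IH]) (use step k in auto)
qed

lemma V1_aux_LIN:
  assumes q: "1 \<le> q"
  shows "LINm (\<lambda>t. V1_aux n q (\<theta>(1 := t)))"
  using q
proof (induction q rule: dec_induct)
  case base
  show ?case using LINm_right[OF LINm_rot[of n 1], of "2^n" idm] by simp
next
  case (step p)
  have "rot n (Suc p) ((\<theta>(1 := t)) (Suc p)) = rot n (Suc p) (\<theta> (Suc p))" for t using step.hyps by simp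
  thus ?case using LINm_left[OF step.IH] by simp
qed

lemma LIN_VSC:
  assumes n: "2 \<le> n" and nc: "1 \<le> nc" "nc \<le> n - 1" and k: "k \<in> qubit1_params n nc"
  shows "LINm (\<lambda>t. V_SC n nc (\<theta>(k := t)))"
  unfolding V_SC_def
proof (cases "k = 1")
  case True
  have "LINm (\<lambda>t. sc_partial n nc 0 (\<theta>(k := t)))"
    using V1_aux_LIN[of n n \<theta>] n True by (simp add: V1_def)
  thus "LINm (\<lambda>t. sc_partial n nc (n - 1) (\<theta>(k := t)))"
    by (rule LIN_upto[rotated 2]) (use True n in auto)
next
  case False
  then obtain l where l: "l \<in> {n - nc + 1..n}" and kl: "k = n + l - 1"
    using k unfolding qubit1_params_def sc_param_index_def by auto
  obtain g' where g': "l = Suc (Suc g')" using l nc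
    by (intro that[of "l - 2"]) auto
  have g: "n - nc \<le> Suc g'" "Suc g' \<le> n - 1" "k = n + Suc g'"
    using l kl g' nc by auto
  have same: "sc_partial n nc g' (\<theta>(k := t)) = sc_partial n nc g' \<theta>" for t
    by (rule sc_partial_indep) (use g in auto)
  have VLa: "Vl n nc (Suc (Suc g')) (\<theta>(k := s)) = rot n 1 s" for s
    using g unfolding Vl_def sc_param_index_def by auto
  have "LINm (\<lambda>t. sc_partial n nc (Suc g') (\<theta>(k := t)))"
    unfolding sc_partial.simps(2) VLa same by (rule LINm_right[OF LINm_rot])
  thus "LINm (\<lambda>t. sc_partial n nc (n - 1) (\<theta>(k := t)))"
    by (rule LIN_upto[rotated 2]) (use g in auto)
qed

lemma TT_form:
  assumes n: "2 \<le> n" and nc: "1 \<le> nc" "nc \<le> n - 1" and k: "k \<in> qubit1_params n nc"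
  shows "TT n \<rho> (V_SC n nc (\<theta>(k := t))) =
     TT n \<rho> (V_SC n nc (\<theta>(k := 0))) * cos (2*t) + TT n \<rho> (V_SC n nc (\<theta>(k := pi/4))) * sin (2*t)"
proof -
  have n1: "1 \<le> n" using n by simp
  define \<phi> where "\<phi> t = V_SC n nc (\<theta>(k := t))" for t
  obtain H where H: "\<And>t. TT n \<rho> (\<phi> t) = (cos t)^2 * TT n \<rho> (\<phi> 0) + (sin t)^2 * TT n \<rho> (\<phi> (pi/2)) + cos t * sin t * H"
    using TT_quad[OF n1 LIN_VSC[OF n nc k, of \<theta>], of \<rho>] unfolding \<phi>_def by blast
  have a: "TT n \<rho> (\<phi> (pi/2)) = - TT n \<rho> (\<phi> 0)"
    using I1[OF n nc k, of \<rho> \<theta> 0] unfolding \<phi>_def by simp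
  have gen: "TT n \<rho> (\<phi> s) = TT n \<rho> (\<phi> 0) * cos (2 * s) + (H/2) * sin (2 * s)" for s
  proof -
    have E: "TT n \<rho> (\<phi> s) = (cos s)^2 * TT n \<rho> (\<phi> 0) - (sin s)^2 * TT n \<rho> (\<phi> 0) + cos s * sin s * H"
      using H[of s] a by simp
    have c2: "cos (2 * s) = (cos s)^2 - (sin s)^2" by (rule cos_double)
    have s2: "sin (2 * s) = 2 * sin s * cos s" by (rule sin_double)
    show ?thesis unfolding E c2 s2 by (simp add: algebra_simps)
  qed
  have q: "TT n \<rho> (\<phi> (pi/4)) = H/2" using gen[of "pi/4"] by simp
  show ?thesis using gen[of t] q unfolding \<phi>_def by simp
qed

definition bndd :: "nat \<Rightarrow> cmat \<Rightarrow> real \<Rightarrow> bool" where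
  "bndd n A a \<longleftrightarrow> (\<forall>i<2^n. \<forall>j<2^n. norm (A i j) \<le> a)"

lemma bndd_mmul:
  assumes "bndd n A a" "bndd n B b"
  shows "bndd n (mmul (2^n) A B) (2^n * a * b)"
  unfolding bndd_def
proof (intro allI impI)
  fix i j :: nat assume i: "i < 2^n" and j: "j < 2^n"
  have "norm (mmul (2^n) A B i j) \<le> (\<Sum>k<(2::nat)^n. norm (A i k) * norm (B k j))"
    unfolding mmul_def by (rule order_trans[OF norm_sum]) (simp add: norm_mult)
  also have "\<dots> \<le> (\<Sum>k<(2::nat)^n. a * b)"
  proof (rule sum_mono)
    fix k assume "k \<in> {..<(2::nat)^n}"
    hence k: "k < 2^n" by simp
    have "norm (A i k) \<le> a" "norm (B k j) \<le> b" using assms i j k unfolding bndd_def by auto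
    thus "norm (A i k) * norm (B k j) \<le> a * b"
      by (intro mult_mono) (auto intro: order_trans[OF norm_ge_zero])
  qed
  also have "\<dots> = 2^n * a * b" by simp
  finally show "norm (mmul (2^n) A B i j) \<le> 2^n * a * b" .
qed

lemma bndd_adj: "bndd n A a \<Longrightarrow> bndd n (adj A) a"
  unfolding bndd_def adj_def by simp

lemma bndd_trace: "bndd n A a \<Longrightarrow> norm (mtrace (2^n) A) \<le> 2^n * a"
proof -
  assume A: "bndd n A a"
  have "norm (mtrace (2^n) A) \<le> (\<Sum>i<(2::nat)^n. norm (A i i))" unfolding mtrace_def by (rule norm_sum)
  also have "\<dots> \<le> (\<Sum>i<(2::nat)^n. a)" by (rule sum_mono) (use A in \<open>auto simp: bndd_def\<close>)
  finally show ?thesis by simp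
qed

lemma norm_rotY: "norm (rotY t a b) \<le> 2"
proof -
  have "norm (rotY t a b) \<le> norm (complex_of_real (cos t) * idm a b) + norm (\<i> * complex_of_real (sin t) * pauliY a b)"
    unfolding rotY_def by (rule norm_triangle_ineq4)
  also have "\<dots> \<le> 1 + 1"
  proof (rule add_mono)
    have "norm (idm a b) \<le> 1" by (simp add: idm_def)
    thus "norm (complex_of_real (cos t) * idm a b) \<le> 1"
      using abs_cos_le_one[of t] by (simp add: norm_mult mult_le_one)
    have "norm (pauliY a b) \<le> 1" by (simp add: pauliY_def)
    thus "norm (\<i> * complex_of_real (sin t) * pauliY a b) \<le> 1"
      using abs_sin_le_one[of t] by (simp add: norm_mult mult_le_one)
  qed
  finally show ?thesis by simp
qed

lemma bndd_rot: "bndd n (rot n q t) 2"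
  unfolding bndd_def rot_def on_qubit_def using norm_rotY by auto

lemma bndd_cnot: "bndd n (cnot n c t) 1"
  unfolding bndd_def cnot_def by (auto simp: idm_def pauliX_def)

lemma bndd_idm: "bndd n idm 1"
  unfolding bndd_def idm_def by auto

lemma bndd_Z1: "bndd n (Z1 n) 1"
  unfolding bndd_def Z1_def on_qubit_def pauliZ_def by auto

lemma bndd_mono: "bndd n A a \<Longrightarrow> a \<le> b \<Longrightarrow> bndd n A b"
  unfolding bndd_def by force

lemma bndd_V1_aux: "\<exists>a. \<forall>\<theta>. bndd n (V1_aux n q \<theta>) a"
proof (induction q)
  case 0 thus ?case using bndd_idm by auto
next
  case (Suc q)
  then obtain a where a: "\<And>\<theta>. bndd n (V1_aux n q \<theta>) a" by blast
  have "bndd n (V1_aux n (Suc q) \<theta>) (2^n * 2 * a)" for \<theta>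
    using bndd_mmul[OF bndd_rot a] by simp
  thus ?case by blast
qed

lemma bndd_Vl: "bndd n (Vl n nc l \<theta>) 2"
  unfolding Vl_def using bndd_rot by auto

lemma bndd_CXl: "bndd n (CXl n nc l) 1"
  unfolding CXl_def using bndd_cnot by auto

lemma bndd_sc: "\<exists>a. \<forall>\<theta>. bndd n (sc_partial n nc m \<theta>) a"
proof (induction m)
  case 0 thus ?case using bndd_V1_aux by (simp add: V1_def)
next
  case (Suc m)
  then obtain a where a: "\<And>\<theta>. bndd n (sc_partial n nc m \<theta>) a" by blast
  have "bndd n (sc_partial n nc (Suc m) \<theta>) (2^n * 2 * (2^n * 1 * a))" for \<theta>
    using bndd_mmul[OF bndd_Vl bndd_mmul[OF bndd_CXl a]] by simp
  thus ?case by blast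
qed

lemma bndd_fixed: "\<exists>a. bndd n A a"
proof -
  have "bndd n A (\<Sum>i<(2::nat)^n. \<Sum>j<(2::nat)^n. norm (A i j))"
    unfolding bndd_def
  proof (intro allI impI)
    fix i j :: nat assume i: "i < 2^n" and j: "j < 2^n"
    have "norm (A i j) \<le> (\<Sum>j<(2::nat)^n. norm (A i j))"
      by (rule member_le_sum) (use j in auto)
    also have "\<dots> \<le> (\<Sum>i<(2::nat)^n. \<Sum>j<(2::nat)^n. norm (A i j))"
      by (rule member_le_sum[where f="\<lambda>i. \<Sum>j<(2::nat)^n. norm (A i j)"]) (use i in \<open>auto intro: sum_nonneg\<close>)
    finally show "norm (A i j) \<le> (\<Sum>i<(2::nat)^n. \<Sum>j<(2::nat)^n. norm (A i j))" .
  qed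
  thus ?thesis by blast
qed

lemma TT_bounded: "\<exists>K. \<forall>\<theta>. \<bar>TT n \<rho> (V_SC n nc \<theta>)\<bar> \<le> K"
proof -
  obtain a where a: "\<And>\<theta>. bndd n (V_SC n nc \<theta>) a" using bndd_sc unfolding V_SC_def by blast
  obtain r where r: "bndd n \<rho> r" using bndd_fixed by blast
  have "bndd n (mmul (2^n) (Z1 n) (mmul (2^n) (V_SC n nc \<theta>) (mmul (2^n) \<rho> (adj (V_SC n nc \<theta>)))))
     (2^n * 1 * (2^n * a * (2^n * r * a)))" for \<theta>
    by (intro bndd_mmul bndd_Z1 a r bndd_adj)
  hence "\<bar>TT n \<rho> (V_SC n nc \<theta>)\<bar> \<le> 2^n * (2^n * 1 * (2^n * a * (2^n * r * a)))" for \<theta>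
    unfolding TT_def by (rule order_trans[OF abs_Re_le_cmod bndd_trace])
  thus ?thesis by blast
qed

definition mmeas :: "'a measure \<Rightarrow> ('a \<Rightarrow> cmat) \<Rightarrow> bool" where
  "mmeas M A \<longleftrightarrow> (\<forall>i j. (\<lambda>x. A x i j) \<in> borel_measurable M)"

lemma mmeas_const: "mmeas M (\<lambda>_. A)" unfolding mmeas_def by simp

lemma mmeas_mmul: "mmeas M A \<Longrightarrow> mmeas M B \<Longrightarrow> mmeas M (\<lambda>x. mmul d (A x) (B x))"
  unfolding mmeas_def mmul_def by (auto intro!: borel_measurable_sum borel_measurable_times)

lemma mmeas_adj: "mmeas M A \<Longrightarrow> mmeas M (\<lambda>x. adj (A x))"
  unfolding mmeas_def adj_def
  by (auto intro!: borel_measurable_continuous_on[where f=cnj] continuous_intros)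

lemma mmeas_rot:
  assumes g: "g \<in> borel_measurable M"
  shows "mmeas M (\<lambda>x. rot n q (g x))"
  unfolding mmeas_def rot_def on_qubit_def
proof (intro allI)
  fix i j
  have c: "continuous_on UNIV (\<lambda>t. rotY t (qbit n q i) (qbit n q j))"
    unfolding rotY_def by (intro continuous_intros)
  show "(\<lambda>x. if \<forall>p\<in>{1..n}. p \<noteq> q \<longrightarrow> qbit n p i = qbit n p j then rotY (g x) (qbit n q i) (qbit n q j) else 0)
      \<in> borel_measurable M"
  proof (cases "\<forall>p\<in>{1..n}. p \<noteq> q \<longrightarrow> qbit n p i = qbit n p j")
    case True
    show ?thesis unfolding if_P[OF True] by (rule borel_measurable_continuous_on[OF c g])
  next
    case False
    show ?thesis unfolding if_not_P[OF False] by simp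
  qed
qed

lemma mmeas_V1_aux: "(\<And>i. (\<lambda>x. \<phi> x i) \<in> borel_measurable M) \<Longrightarrow> mmeas M (\<lambda>x. V1_aux n q (\<phi> x))"
  by (induction q) (auto intro!: mmeas_mmul mmeas_rot simp: mmeas_const)

lemma mmeas_sc: "(\<And>i. (\<lambda>x. \<phi> x i) \<in> borel_measurable M) \<Longrightarrow> mmeas M (\<lambda>x. sc_partial n nc m (\<phi> x))"
proof (induction m)
  case 0 thus ?case by (simp add: V1_def mmeas_V1_aux)
next
  case (Suc m)
  have "mmeas M (\<lambda>x. Vl n nc (Suc (Suc m)) (\<phi> x))"
    unfolding Vl_def using Suc.prems by (cases "Suc (Suc m) \<le> n - nc") (auto intro: mmeas_rot)
  thus ?case using Suc by (auto intro!: mmeas_mmul mmeas_const)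
qed

lemma TT_meas:
  assumes "\<And>i. (\<lambda>x. \<phi> x i) \<in> borel_measurable M"
  shows "(\<lambda>x. TT n \<rho> (V_SC n nc (\<phi> x))) \<in> borel_measurable M"
proof -
  have m: "mmeas M (\<lambda>x. mmul (2^n) (Z1 n) (mmul (2^n) (V_SC n nc (\<phi> x)) (mmul (2^n) \<rho> (adj (V_SC n nc (\<phi> x))))))"
    unfolding V_SC_def using assms
    by (intro mmeas_mmul mmeas_const mmeas_sc mmeas_adj) auto
  have s: "(\<lambda>x. mtrace (2^n) (mmul (2^n) (Z1 n) (mmul (2^n) (V_SC n nc (\<phi> x)) (mmul (2^n) \<rho> (adj (V_SC n nc (\<phi> x))))))) \<in> borel_measurable M"
    unfolding mtrace_def using m unfolding mmeas_def by (auto intro!: borel_measurable_sum)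
  show ?thesis unfolding TT_def using measurable_compose[OF s borel_measurable_Re] by simp
qed


lemma comp_meas: "(\<lambda>\<theta>. \<theta> i) \<in> borel_measurable (PiM I (\<lambda>_. UM))"
proof (cases "i \<in> I")
  case True
  have "(\<lambda>\<theta>. \<theta> i) \<in> measurable (PiM I (\<lambda>_. UM)) UM"
    by (rule measurable_component_singleton[OF True])
  moreover have "measurable (PiM I (\<lambda>_. UM)) UM = measurable (PiM I (\<lambda>_. UM)) borel"
    by (rule measurable_cong_sets) auto
  ultimately show ?thesis by simp
next
  case False
  have "(\<lambda>\<theta>. \<theta> i) \<in> borel_measurable (PiM I (\<lambda>_. UM)) \<longleftrightarrow> (\<lambda>\<theta>. undefined :: real) \<in> borel_measurable (PiM I (\<lambda>_. UM))"
    by (rule measurable_cong) (use False in \<open>auto simp: space_PiM PiE_def extensional_def\<close>)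
  thus ?thesis by simp
qed

lemma main_abstract:
  fixes f :: "(nat \<Rightarrow> real) \<Rightarrow> real" and I :: "nat set" and k :: nat and K :: real
  assumes fin: "finite I" and kI: "k \<in> I"
    and form: "\<And>\<theta> t. f (\<theta>(k := t)) - 1/2 = (f (\<theta>(k := 0)) - 1/2) * cos (2*t) + (f (\<theta>(k := pi/4)) - 1/2) * sin (2*t)"
    and bnd: "\<And>\<theta>. \<bar>f \<theta> - 1/2\<bar> \<le> K"
    and meas: "\<And>\<phi>. (\<And>i. (\<lambda>x. \<phi> x i) \<in> borel_measurable (PiM I (\<lambda>_. UM))) \<Longrightarrow> (\<lambda>x. f (\<phi> x)) \<in> borel_measurable (PiM I (\<lambda>_. UM))"
  shows "(\<integral>\<theta>. (pderiv_param f k \<theta>)^2 \<partial>PiM I (\<lambda>_. UM)) = 4 * (\<integral>\<theta>. (f \<theta> - 1/2)^2 \<partial>PiM I (\<lambda>_. UM))"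
proof -
  define B where "B \<theta> = f (\<theta>(k := 0)) - 1/2" for \<theta> :: "nat \<Rightarrow> real"
  define C where "C \<theta> = f (\<theta>(k := pi/4)) - 1/2" for \<theta> :: "nat \<Rightarrow> real"
  have fform: "f (\<theta>(k := t)) = 1/2 + B \<theta> * cos (2*t) + C \<theta> * sin (2*t)" for \<theta> t
    using form[of \<theta> t] unfolding B_def C_def by simp
  have BC_upd: "B (\<theta>(k := y)) = B \<theta>" "C (\<theta>(k := y)) = C \<theta>" for \<theta> y
    unfolding B_def C_def by simp_all
  have dv: "pderiv_param f k \<theta> = - 2 * B \<theta> * sin (2 * \<theta> k) + 2 * C \<theta> * cos (2 * \<theta> k)" for \<theta>
  proof -
    have e: "(\<lambda>t. f (\<theta>(k := t))) = (\<lambda>t. 1/2 + B \<theta> * cos (2*t) + C \<theta> * sin (2*t))"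
      using fform by auto
    have "((\<lambda>t. 1/2 + B \<theta> * cos (2*t) + C \<theta> * sin (2*t)) has_real_derivative
          (- 2 * B \<theta> * sin (2 * \<theta> k) + 2 * C \<theta> * cos (2 * \<theta> k))) (at (\<theta> k))"
      by (auto intro!: derivative_eq_intros simp: algebra_simps)
    thus ?thesis unfolding pderiv_param_def e by (rule DERIV_imp_deriv)
  qed
  have fv: "f \<theta> - 1/2 = B \<theta> * cos (2 * \<theta> k) + C \<theta> * sin (2 * \<theta> k)" for \<theta>
    using fform[of \<theta> "\<theta> k"] by simp
  define J where "J = I - {k}"
  have IJ: "I = insert k J" and kJ: "k \<notin> J" and finJ: "finite J" using kI fin unfolding J_def by auto
  interpret product_prob_space "\<lambda>_. UM"
    by (rule product_prob_spaceI) (rule prob_space_uniform_measure, auto)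
  let ?P = "PiM I (\<lambda>_. UM)"
  have ps: "prob_space ?P" by (rule prob_space_PiM) (rule prob_space_uniform_measure, auto)
  have cm: "(\<lambda>\<theta>. \<theta> i) \<in> borel_measurable ?P" for i by (rule comp_meas)
  have upd_meas: "(\<lambda>x. (x(k := c)) i) \<in> borel_measurable ?P" for c i
    by (cases "i = k") (auto simp: cm)
  have Bm: "B \<in> borel_measurable ?P" unfolding B_def using meas[OF upd_meas] by measurable
  have Cm: "C \<in> borel_measurable ?P" unfolding C_def using meas[OF upd_meas] by measurable
  have Kp: "0 \<le> K" using bnd[of undefined] by linarith
  have Bb: "\<bar>B \<theta>\<bar> \<le> K" and Cb: "\<bar>C \<theta>\<bar> \<le> K" for \<theta> unfolding B_def C_def using bnd by auto
  define h1 where "h1 \<theta> = (- 2 * B \<theta> * sin (2 * \<theta> k) + 2 * C \<theta> * cos (2 * \<theta> k))^2" for \<theta>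
  define h2 where "h2 \<theta> = (B \<theta> * cos (2 * \<theta> k) + C \<theta> * sin (2 * \<theta> k))^2" for \<theta>
  have L: "(\<lambda>\<theta>. (pderiv_param f k \<theta>)^2) = h1" unfolding h1_def dv by simp
  have R: "(\<lambda>\<theta>. (f \<theta> - 1/2)^2) = h2" unfolding h2_def fv by simp
  have h1m: "h1 \<in> borel_measurable ?P" unfolding h1_def using Bm Cm cm[of k] by measurable
  have h2m: "h2 \<in> borel_measurable ?P" unfolding h2_def using Bm Cm cm[of k] by measurable
  have h1b: "norm (h1 \<theta>) \<le> (4*K)^2" for \<theta>
  proof -
    have "\<bar>- 2 * B \<theta> * sin (2 * \<theta> k) + 2 * C \<theta> * cos (2 * \<theta> k)\<bar> \<le> 2 * \<bar>B \<theta>\<bar> + 2 * \<bar>C \<theta>\<bar>"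
    proof -
      have "\<bar>- 2 * B \<theta> * sin (2 * \<theta> k)\<bar> \<le> 2 * \<bar>B \<theta>\<bar>"
        using abs_sin_le_one[of "2 * \<theta> k"] by (simp add: abs_mult mult_left_le)
      moreover have "\<bar>2 * C \<theta> * cos (2 * \<theta> k)\<bar> \<le> 2 * \<bar>C \<theta>\<bar>"
        using abs_cos_le_one[of "2 * \<theta> k"] by (simp add: abs_mult mult_left_le)
      ultimately show ?thesis by linarith
    qed
    also have "\<dots> \<le> \<bar>4 * K\<bar>" using Bb[of \<theta>] Cb[of \<theta>] Kp by simp
    finally show ?thesis unfolding h1_def by (simp add: abs_le_square_iff)
  qed
  have h2b: "norm (h2 \<theta>) \<le> (2*K)^2" for \<theta>
  proof -
    have "\<bar>B \<theta> * cos (2 * \<theta> k) + C \<theta> * sin (2 * \<theta> k)\<bar> \<le> \<bar>B \<theta>\<bar> + \<bar>C \<theta>\<bar>"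
    proof -
      have "\<bar>B \<theta> * cos (2 * \<theta> k)\<bar> \<le> \<bar>B \<theta>\<bar>"
        using abs_cos_le_one[of "2 * \<theta> k"] by (simp add: abs_mult mult_left_le)
      moreover have "\<bar>C \<theta> * sin (2 * \<theta> k)\<bar> \<le> \<bar>C \<theta>\<bar>"
        using abs_sin_le_one[of "2 * \<theta> k"] by (simp add: abs_mult mult_left_le)
      ultimately show ?thesis by linarith
    qed
    also have "\<dots> \<le> \<bar>2 * K\<bar>" using Bb[of \<theta>] Cb[of \<theta>] Kp by simp
    finally show ?thesis unfolding h2_def by (simp add: abs_le_square_iff)
  qed
  have h1i: "integrable ?P h1" by (rule finite_measure.integrable_const_bound[OF prob_space.axioms(1)[OF ps] _ h1m]) (use h1b in auto)
  have h2i: "integrable ?P h2" by (rule finite_measure.integrable_const_bound[OF prob_space.axioms(1)[OF ps] _ h2m]) (use h2b in auto)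
  have F1: "integral\<^sup>L ?P h1 = (\<integral>x. (\<integral>y. h1 (x(k := y)) \<partial>UM) \<partial>PiM J (\<lambda>_. UM))"
    unfolding IJ by (rule product_integral_insert[OF finJ kJ]) (use h1i IJ in simp)
  have F2: "integral\<^sup>L ?P h2 = (\<integral>x. (\<integral>y. h2 (x(k := y)) \<partial>UM) \<partial>PiM J (\<lambda>_. UM))"
    unfolding IJ by (rule product_integral_insert[OF finJ kJ]) (use h2i IJ in simp)
  have in1: "(\<integral>y. h1 (x(k := y)) \<partial>UM) = 4 * (((C x)^2 + (B x)^2) / 2)" for x
  proof -
    have e: "(\<lambda>y. h1 (x(k := y))) = (\<lambda>y. 4 * (C x * cos (2*y) + (- B x) * sin (2*y))^2)"
      unfolding h1_def BC_upd by (auto simp: power2_eq_square algebra_simps)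
    have "(\<integral>y. 4 * (C x * cos (2*y) + (- B x) * sin (2*y))^2 \<partial>UM) = 4 * (\<integral>y. (C x * cos (2*y) + (- B x) * sin (2*y))^2 \<partial>UM)"
      by (rule integral_mult_right_zero)
    also have "\<dots> = 4 * (((C x)^2 + (- B x)^2) / 2)" by (simp only: integral_UM_sq)
    finally show ?thesis unfolding e by simp
  qed
  have in2: "(\<integral>y. h2 (x(k := y)) \<partial>UM) = ((B x)^2 + (C x)^2) / 2" for x
  proof -
    have "(\<lambda>y. h2 (x(k := y))) = (\<lambda>y. (B x * cos (2*y) + C x * sin (2*y))^2)"
      unfolding h2_def BC_upd by simp
    thus ?thesis by (simp add: integral_UM_sq)
  qed
  show ?thesis
    unfolding L R F1 F2 in1 in2 integral_mult_right_zero[symmetric]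
    by (simp add: add.commute)
qed


theorem lemma10:
  fixes n nc k :: nat and \<rho> :: cmat
  assumes "n \<ge> 2" and "1 \<le> nc" and "nc \<le> n - 1"
    and "density_matrix (2^n) \<rho>"
    and "k \<in> qubit1_params n nc"
  shows "(\<integral>\<theta>. (pderiv_param (f_SC n nc \<rho>) k \<theta>)^2 \<partial>param_measure n)
       = 4 * (\<integral>\<theta>. (f_SC n nc \<rho> \<theta> - 1/2)^2 \<partial>param_measure n)"
proof -
  have n: "2 \<le> n" and nc: "1 \<le> nc" "nc \<le> n - 1" and k: "k \<in> qubit1_params n nc" using assms by auto
  have fe: "f_SC n nc \<rho> \<theta> = 1/2 + 1/2 * TT n \<rho> (V_SC n nc \<theta>)" for \<theta>
    unfolding f_SC_def TT_def by simp
  have kI: "k \<in> {1..2*n-1}" using k n unfolding qubit1_params_def sc_param_index_def by auto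
  obtain K where K: "\<And>\<theta>. \<bar>TT n \<rho> (V_SC n nc \<theta>)\<bar> \<le> K" using TT_bounded by blast
  have "(\<integral>\<theta>. (pderiv_param (f_SC n nc \<rho>) k \<theta>)^2 \<partial>PiM {1..2*n-1} (\<lambda>_. UM))
       = 4 * (\<integral>\<theta>. (f_SC n nc \<rho> \<theta> - 1/2)^2 \<partial>PiM {1..2*n-1} (\<lambda>_. UM))"
  proof (rule main_abstract[where K="K/2"])
    show "finite {1..2*n-1}" by simp
    show "k \<in> {1..2*n-1}" by (rule kI)
    show "f_SC n nc \<rho> (\<theta>(k := t)) - 1/2 = (f_SC n nc \<rho> (\<theta>(k := 0)) - 1/2) * cos (2*t) + (f_SC n nc \<rho> (\<theta>(k := pi/4)) - 1/2) * sin (2*t)" for \<theta> t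
      unfolding fe using TT_form[OF n nc k, of \<rho> \<theta> t] by (simp add: algebra_simps)
    show "\<bar>f_SC n nc \<rho> \<theta> - 1/2\<bar> \<le> K/2" for \<theta> unfolding fe using K[of \<theta>] by simp
    show "(\<lambda>x. f_SC n nc \<rho> (\<phi> x)) \<in> borel_measurable (PiM {1..2*n-1} (\<lambda>_. UM))"
      if "\<And>i. (\<lambda>x. \<phi> x i) \<in> borel_measurable (PiM {1..2*n-1} (\<lambda>_. UM))" for \<phi>
      unfolding fe using TT_meas[OF that, of n \<rho> nc] by simp
  qed
  thus ?thesis unfolding param_measure_def .
qed


end
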